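(* Let $d\ge5$, $\varepsilon\in(0,1/12)$ and $L_u=u^{2\varepsilon}/\sqrt u$. There exist $u_1=u_1(\varepsilon)>0$ and constants $\xi>0$, $C>0$ such that for all $u\in(0,u_1)$, $\mathbb P(\mathscr C_u)\ge1-Ce^{-\xi u^{-\varepsilon}}$, where $\mathscr C_u$ is the event that every path $w\in\vec{\mathcal W}_u$ satisfies $\mathrm{cap}\big(\mathrm{range}(w)\cap B(2L_u)\big)<u^{-2\varepsilon}L_u^2$.
   Context: Random interlacements at level $u$ on $\mathbb{Z}^d$. $\vec{\mathcal W}_u$ denotes the collection of paths obtained by taking each trajectory with label $\le u$ that hits $B(2L_u)$ and keeping its part from its first entrance into $B(2L_u)$ onwards; their number is Poisson with parameter $u\,\mathrm{cap}(B(2L_u))$ and, given the number, they are i.i.d. simple random walks started from the normalized equilibrium measure of $B(2L_u)$. $B(r)=[-r,r)^d\cap\mathbb{Z}^d$, $\mathrm{cap}$ is discrete capacity, $\mathrm{range}(w)$ the set of visited vertices. *)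

theory Defs
  imports "HOL-Analysis.Analysis" "HOL-Probability.Probability"
begin

text \<open>The lattice Z^d is modelled as int ^ 'd, with d = CARD('d).\<close>

definition box_Zd :: "real \<Rightarrow> (int ^ 'd::finite) set" where
  "box_Zd r = {x. \<forall>i. - r \<le> real_of_int (x $ i) \<and> real_of_int (x $ i) < r}"

definition unit_steps :: "(int ^ 'd::finite) set" where
  "unit_steps = {v. \<exists>i. v = axis i 1 \<or> v = axis i (-1)}"

definition step_pmf :: "(int ^ 'd::finite) pmf" where
  "step_pmf = pmf_of_set unit_steps"

definition steps_space :: "(int ^ 'd::finite) stream measure" where
  "steps_space = stream_space (measure_pmf step_pmf)"

definition walk_pos :: "int ^ 'd::finite \<Rightarrow> (int ^ 'd) stream \<Rightarrow> nat \<Rightarrow> int ^ 'd" where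
  "walk_pos x s n = x + (\<Sum>k<n. s !! k)"

definition walk_range :: "int ^ 'd::finite \<Rightarrow> (int ^ 'd) stream \<Rightarrow> (int ^ 'd) set" where
  "walk_range x s = range (walk_pos x s)"

definition escape_prob :: "(int ^ 'd::finite) set \<Rightarrow> int ^ 'd \<Rightarrow> real" where
  "escape_prob K x = measure steps_space {s \<in> space steps_space. \<forall>n>0. walk_pos x s n \<notin> K}"

definition equilibrium :: "(int ^ 'd::finite) set \<Rightarrow> int ^ 'd \<Rightarrow> real" where
  "equilibrium K x = (if x \<in> K then escape_prob K x else 0)"

definition cap :: "(int ^ 'd::finite) set \<Rightarrow> real" where
  "cap K = (\<Sum>x\<in>K. equilibrium K x)"

definition norm_equilibrium :: "(int ^ 'd::finite) set \<Rightarrow> (int ^ 'd) pmf" where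
  "norm_equilibrium K = embed_pmf (\<lambda>x. equilibrium K x / cap K)"

definition L_scale :: "real \<Rightarrow> real \<Rightarrow> real" where
  "L_scale \<epsilon> u = u powr (2 * \<epsilon>) / sqrt u"

text \<open>Law of the collection W_u: a Poisson(u cap(B(2L_u))) number N of paths, together with
  an i.i.d. sequence of (starting point, increments) pairs, the start drawn from the normalized
  equilibrium measure of B(2L_u); W_u consists of the first N of them. Given N, these N paths are
  i.i.d. simple random walks started from the normalized equilibrium measure.\<close>
definition W_space :: "'d::finite itself \<Rightarrow> real \<Rightarrow> real \<Rightarrow>
    (nat \<times> ((int ^ 'd) \<times> (int ^ 'd) stream) stream) measure" where
  "W_space _ \<epsilon> u =
     (let B = (box_Zd (2 * L_scale \<epsilon> u) :: (int ^ 'd) set) in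
      measure_pmf (poisson_pmf (u * cap B)) \<Otimes>\<^sub>M
      stream_space (measure_pmf (norm_equilibrium B) \<Otimes>\<^sub>M (steps_space :: (int ^ 'd) stream measure)))"

definition C_event :: "'d::finite itself \<Rightarrow> real \<Rightarrow> real \<Rightarrow>
    (nat \<times> ((int ^ 'd) \<times> (int ^ 'd) stream) stream) set" where
  "C_event _ \<epsilon> u =
     (let B = (box_Zd (2 * L_scale \<epsilon> u) :: (int ^ 'd) set) in
      {(N, ws). \<forall>i<N. cap (walk_range (fst (ws !! i)) (snd (ws !! i)) \<inter> B)
                         < u powr (-2 * \<epsilon>) * (L_scale \<epsilon> u)\<^sup>2})"

definition prob_C :: "'d::finite itself \<Rightarrow> real \<Rightarrow> real \<Rightarrow> real" where
  "prob_C T \<epsilon> u = measure (W_space T \<epsilon> u) (C_event T \<epsilon> u)"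

end

theory Submission
  imports Defs
begin


lemma axis_nth: "(axis i c :: 'a::zero ^ 'd::finite) $ j = (if j = i then c else 0)"
  by (simp add: axis_def)

lemma unit_steps_eq: "(unit_steps :: (int^'d::finite) set) = (\<lambda>(i,\<sigma>). axis i \<sigma>) ` (UNIV \<times> {1,-1})"
  unfolding unit_steps_def by auto

lemma inj_axis: "inj_on (\<lambda>(i,\<sigma>). (axis i \<sigma> :: int^'d::finite)) (UNIV \<times> {1,-1})"
proof (rule inj_onI, clarsimp)
  fix i j :: 'd and a b :: int
  assume "a = 1 \<or> a = -1" "b = 1 \<or> b = -1" "axis i a = (axis j b :: int^'d)"
  then have "(axis i a :: int^'d) $ i = axis j b $ i" "(axis i a :: int^'d) $ j = axis j b $ j" by auto
  with \<open>a = 1 \<or> a = -1\<close> \<open>b = 1 \<or> b = -1\<close> show "i = j \<and> a = b"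
    by (auto simp: axis_nth split: if_splits)
qed

lemma finite_unit_steps: "finite (unit_steps :: (int^'d::finite) set)"
  unfolding unit_steps_eq by simp

lemma unit_steps_ne: "(unit_steps :: (int^'d::finite) set) \<noteq> {}"
  unfolding unit_steps_eq by auto

lemma card_unit_steps: "card (unit_steps :: (int^'d::finite) set) = 2 * CARD('d)"
  unfolding unit_steps_eq by (subst card_image[OF inj_axis]) (simp add: card_cartesian_product)

lemma sum_unit_steps: "(\<Sum>e\<in>(unit_steps :: (int^'d::finite) set). g e) = (\<Sum>i\<in>UNIV. g (axis i 1) + g (axis i (-1)))"
proof -
  have "(\<Sum>e\<in>(unit_steps :: (int^'d::finite) set). g e) = (\<Sum>x\<in>UNIV \<times> {1,-1}. g (case x of (i,\<sigma>) \<Rightarrow> axis i \<sigma>))"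
    unfolding unit_steps_eq by (subst sum.reindex[OF inj_axis]) simp
  also have "\<dots> = (\<Sum>i\<in>UNIV. \<Sum>\<sigma>\<in>{1,-1::int}. g (axis i \<sigma>))"
    unfolding sum.cartesian_product by (rule sum.cong) auto
  also have "\<dots> = (\<Sum>i\<in>UNIV. g (axis i 1) + g (axis i (-1)))"
    by simp
  finally show ?thesis .
qed

lemma nn_integral_step:
  "(\<integral>\<^sup>+e. ennreal (g e) \<partial>measure_pmf (step_pmf :: (int^'d::finite) pmf)) =
     ennreal ((\<Sum>i\<in>UNIV. g (axis i 1) + g (axis i (-1))) / (2 * CARD('d)))"
  if "\<And>e. g e \<ge> 0"
proof -
  have "(\<integral>\<^sup>+e. ennreal (g e) \<partial>measure_pmf (step_pmf :: (int^'d::finite) pmf))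
     = (\<Sum>e\<in>unit_steps. ennreal (g e)) / card (unit_steps :: (int^'d) set)"
    unfolding step_pmf_def by (rule nn_integral_pmf_of_set[OF unit_steps_ne finite_unit_steps])
  also have "\<dots> = ennreal (\<Sum>e\<in>(unit_steps :: (int^'d) set). g e) / ennreal (2 * CARD('d))"
    using that by (simp add: card_unit_steps sum_ennreal ennreal_of_nat_eq_real_of_nat)
  also have "\<dots> = ennreal ((\<Sum>e\<in>(unit_steps :: (int^'d) set). g e) / (2 * CARD('d)))"
    using that by (subst divide_ennreal) (auto intro!: sum_nonneg)
  finally show ?thesis by (simp add: sum_unit_steps)
qed

lemma prob_space_steps: "prob_space (steps_space :: (int^'d::finite) stream measure)"
  unfolding steps_space_def by (rule prob_space.prob_space_stream_space) (rule prob_space_measure_pmf)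

lemma walk_pos_0[simp]: "walk_pos x s 0 = x"
  by (simp add: walk_pos_def)

lemma walk_pos_Suc: "walk_pos x (e ## s) (Suc n) = walk_pos (x + e) s n"
  unfolding walk_pos_def sum.lessThan_Suc_shift by (simp add: add.assoc)

lemma walk_pos_Suc': "walk_pos x s (Suc n) = walk_pos x s n + s !! n"
  unfolding walk_pos_def by (simp add: add.assoc)



lemma two_var_ineq:
  fixes A x y :: real
  assumes "0 \<le> x" "0 \<le> y" "x + y < A"
  shows "1/(A - x) + 1/(A - y) \<le> 1/A + 1/(A - x - y)"
proof -
  have p1: "A - x - y > 0" using assms by linarith
  have "1/(A-x) - 1/A = x / (A*(A-x))" using assms p1 by (simp add: field_simps)
  also have "\<dots> \<le> x / ((A-y)*(A-x-y))"
    using assms p1 by (intro divide_left_mono mult_mono mult_pos_pos) auto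
  also have "\<dots> = 1/(A-x-y) - 1/(A-y)" using assms p1 by (simp add: field_simps)
  finally show ?thesis by simp
qed

lemma super_sum:
  fixes u :: "'i \<Rightarrow> real" and A :: real
  assumes "finite I" "\<And>i. i \<in> I \<Longrightarrow> 0 \<le> u i" "4 * sum u I < A"
  shows "(\<Sum>i\<in>I. 1/(A - 4 * u i) - 1/A) \<le> 1/(A - 4 * sum u I) - 1/A"
  using assms
proof (induction I rule: finite_induct)
  case empty then show ?case by simp
next
  case (insert j I)
  have nn: "0 \<le> sum u I" using insert by (auto intro: sum_nonneg)
  have uj: "0 \<le> u j" using insert by auto
  have "4 * sum u (insert j I) = 4 * u j + 4 * sum u I" using insert by simp
  then have lt: "4 * sum u I < A" using insert(5) uj by linarith
  have IH: "(\<Sum>i\<in>I. 1/(A - 4 * u i) - 1/A) \<le> 1/(A - 4 * sum u I) - 1/A"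
    using insert lt by auto
  have tv: "1/(A - 4*u j) + 1/(A - 4 * sum u I) \<le> 1/A + 1/(A - 4*u j - 4 * sum u I)"
    using insert nn uj by (intro two_var_ineq) auto
  show ?case using insert IH tv by (simp add: algebra_simps)
qed

lemma final_alg:
  fixes D a m :: real
  assumes "D \<ge> 5" "a \<ge> D" "m \<ge> 0"
  shows "(D - 1)/(D*(a+m+1)) + (a+m+1)/(D*((a+m+1)^2 - 4*m)) \<le> 1/(a+m) - 2*a/(D*(a+m+1)^3)"
proof -
  define r where "r = a + m"
  define q where "q = r + 1"
  define Q where "Q = (r-1)^2 + 4*a"
  have Qeq: "q^2 - 4*m = Q" unfolding Q_def q_def r_def by (simp add: power2_eq_square algebra_simps)
  have rpos: "r > 0" "q > 0" "Q > 0" "D > 0" using assms unfolding r_def q_def Q_def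
    by (auto intro: add_nonneg_pos)
  have ra: "r \<ge> a" using assms unfolding r_def by simp
  have Qle: "Q \<le> q^2" using Qeq assms by linarith
  have num: "0 \<le> (D-4)*r^2 + (2*a-2*D)*r + D*(1+4*a)"
    using assms rpos by (intro add_nonneg_nonneg mult_nonneg_nonneg) auto
  have eq: "1/r - (D-1)/(D*q) - q/(D*Q) - 2*a/(D*q*Q)
          = ((D-4)*r^2 + (2*a-2*D)*r + D*(1+4*a)) / (D*r*q*Q)"
  proof -
    have nz: "r \<noteq> 0" "q \<noteq> 0" "Q \<noteq> 0" "D \<noteq> 0" using rpos by auto
    have "1/r - (D-1)/(D*q) - q/(D*Q) - 2*a/(D*q*Q)
         = (D*q*Q - (D-1)*r*Q - q*q*r - 2*a*r) / (D*r*q*Q)"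
      using nz by (simp add: field_simps)
    also have "D*q*Q - (D-1)*r*Q - q*q*r - 2*a*r = (D-4)*r^2 + (2*a-2*D)*r + D*(1+4*a)"
      unfolding Q_def q_def by (simp add: power2_eq_square algebra_simps)
    finally show ?thesis .
  qed
  have "0 \<le> 1/r - (D-1)/(D*q) - q/(D*Q) - 2*a/(D*q*Q)"
    unfolding eq using num rpos by simp
  moreover have "2*a/(D*q^3) \<le> 2*a/(D*q*Q)"
    using rpos assms Qle by (intro divide_left_mono mult_pos_pos) (auto simp: power3_eq_cube power2_eq_square)
  ultimately have "(D - 1)/(D*q) + q/(D*(q^2 - 4*m)) \<le> 1/r - 2*a/(D*q^3)" unfolding Qeq by linarith
  then show ?thesis unfolding q_def r_def .
qed



definition nsq :: "int ^ 'd::finite \<Rightarrow> real" where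
  "nsq x = (\<Sum>i\<in>UNIV. (real_of_int (x $ i))^2)"

lemma nsq_nonneg: "0 \<le> nsq x"
  unfolding nsq_def by (auto intro: sum_nonneg)

lemma coord_le_nsq: "(real_of_int (x $ i))^2 \<le> nsq x"
  unfolding nsq_def by (rule member_le_sum) auto

lemma nsq_axis: "nsq (x + axis i c) = nsq x + 2 * real_of_int c * real_of_int (x $ i) + (real_of_int c)^2"
proof -
  have "nsq (x + axis i c) = (\<Sum>j\<in>UNIV. (real_of_int (x $ j))^2 + (if j = i then 2 * real_of_int c * real_of_int (x $ j) + (real_of_int c)^2 else 0))"
    unfolding nsq_def by (rule sum.cong) (auto simp: axis_nth power2_eq_square algebra_simps)
  also have "\<dots> = nsq x + 2 * real_of_int c * real_of_int (x $ i) + (real_of_int c)^2"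
    unfolding nsq_def by (simp add: sum.distrib)
  finally show ?thesis .
qed

lemma Ph_bound:
  fixes x :: "int ^ 'd::finite" and a :: real
  assumes D5: "real CARD('d) \<ge> 5" and aD: "a \<ge> real CARD('d)"
  shows "(\<Sum>i\<in>UNIV. 1/(a + nsq (x + axis i 1)) + 1/(a + nsq (x + axis i (-1)))) / (2 * real CARD('d))
         \<le> 1/(a + nsq x) - 2*a/(real CARD('d) * (a + nsq x + 1)^3)"
proof -
  define D where "D = real CARD('d)"
  define m where "m = nsq x"
  define q where "q = a + m + 1"
  define u where "u = (\<lambda>i. (real_of_int (x $ i))^2)"
  have m0: "m \<ge> 0" unfolding m_def by (rule nsq_nonneg)
  have Dpos: "D > 0" using D5 unfolding D_def by simp
  have apos: "a > 0" using aD D5 by linarith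
  have sumu: "sum u UNIV = m" unfolding u_def m_def nsq_def ..
  have qgt: "q - 2 * \<bar>real_of_int (x $ i)\<bar> > 0" for i
  proof -
    let ?t = "\<bar>real_of_int (x $ i)\<bar>"
    have "?t^2 \<le> m" unfolding m_def using coord_le_nsq[of x i] by simp
    then have "q - 2 * ?t \<ge> a + (?t - 1)^2" unfolding q_def by (simp add: power2_eq_square algebra_simps)
    moreover have "a + (?t - 1)^2 > 0" using apos by (simp add: add_pos_nonneg)
    ultimately show ?thesis by linarith
  qed
  have trm: "1/(a + nsq (x + axis i 1)) + 1/(a + nsq (x + axis i (-1))) = 2*q * (1/(q^2 - 4 * u i))" for i
  proof -
    let ?t = "real_of_int (x $ i)"
    have e1: "a + nsq (x + axis i 1) = q + 2*?t" and e2: "a + nsq (x + axis i (-1)) = q - 2*?t"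
      unfolding nsq_axis q_def m_def by simp_all
    have p1: "q + 2*?t > 0" "q - 2*?t > 0" using qgt[of i] by (auto simp: abs_if split: if_splits)
    have "q^2 - 4 * u i = (q + 2*?t)*(q - 2*?t)" unfolding u_def by (simp add: power2_eq_square algebra_simps)
    then show ?thesis unfolding e1 e2 using p1 by (simp add: field_simps)
  qed
  have Apos: "4 * sum u UNIV < q^2"
  proof -
    have "q^2 - 4*m = (a + m - 1)^2 + 4*a" unfolding q_def by (simp add: power2_eq_square algebra_simps)
    then show ?thesis using apos sumu by (smt (verit) zero_le_power2)
  qed
  have u0: "0 \<le> u i" for i unfolding u_def by simp
  have ss: "(\<Sum>i\<in>UNIV. 1/(q^2 - 4 * u i) - 1/q^2) \<le> 1/(q^2 - 4 * sum u UNIV) - 1/q^2"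
    by (rule super_sum) (use u0 Apos in auto)
  have "(\<Sum>i\<in>UNIV. 1/(a + nsq (x + axis i 1)) + 1/(a + nsq (x + axis i (-1))))
       = 2*q * (\<Sum>i\<in>UNIV. 1/(q^2 - 4 * u i))"
    by (simp add: trm sum_distrib_left)
  also have "(\<Sum>i\<in>UNIV. 1/(q^2 - 4 * u i)) = (\<Sum>i\<in>UNIV. 1/(q^2 - 4 * u i) - 1/q^2) + D/q^2"
    unfolding D_def by (simp add: sum_subtractf)
  also have "2*q * (\<dots>) \<le> 2*q * (1/(q^2 - 4 * m) - 1/q^2 + D/q^2)"
    using ss sumu unfolding q_def using apos m0 by (intro mult_left_mono) auto
  finally have le1: "(\<Sum>i\<in>UNIV. 1/(a + nsq (x + axis i 1)) + 1/(a + nsq (x + axis i (-1))))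
       \<le> 2*q * (1/(q^2 - 4 * m) - 1/q^2 + D/q^2)" .
  have qpos: "q > 0" unfolding q_def using apos m0 by simp
  have "2*q * (1/(q^2 - 4 * m) - 1/q^2 + D/q^2) / (2*D) = (D - 1)/(D*q) + q/(D*(q^2 - 4*m))"
  proof -
    have "q*q - 4*m \<noteq> 0" using Apos sumu by (simp add: power2_eq_square)
    then show ?thesis using qpos Dpos by (simp add: field_simps power2_eq_square)
  qed
  also have "\<dots> \<le> 1/(a+m) - 2*a/(D*q^3)"
    unfolding q_def using final_alg[of D a m] D5 aD m0 unfolding D_def by simp
  finally show ?thesis using le1 Dpos unfolding D_def[symmetric] m_def[symmetric] q_def[symmetric]
    by (smt (verit) divide_right_mono)
qed



definition occ :: "(int^'d::finite) set \<Rightarrow> int^'d \<Rightarrow> (int^'d) stream \<Rightarrow> nat \<Rightarrow> nat" where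
  "occ B x s n = (\<Sum>k<n. if walk_pos x s k \<in> B then 1 else 0)"

lemma occ_0[simp]: "occ B x s 0 = 0" by (simp add: occ_def)

lemma occ_Suc: "occ B x (e ## s) (Suc n) = (if x \<in> B then 1 else 0) + occ B (x + e) s n"
  unfolding occ_def sum.lessThan_Suc_shift by (simp add: walk_pos_Suc del: walk_pos_0) (simp add: walk_pos_def)

lemma occ_mono: "m \<le> n \<Longrightarrow> occ B x s m \<le> occ B x s n"
  unfolding occ_def by (rule sum_mono2) auto

lemma occ_card: "occ B x s n = card {k\<in>{..<n}. walk_pos x s k \<in> B}"
proof -
  have "card {k\<in>{..<n}. walk_pos x s k \<in> B} = (\<Sum>k\<in>{k\<in>{..<n}. walk_pos x s k \<in> B}. 1)"
    by (rule card_eq_sum)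
  also have "\<dots> = occ B x s n" unfolding occ_def by (rule sum.inter_filter) simp
  finally show ?thesis ..
qed

lemma sum_list_stake: "sum_list (stake n s) = (\<Sum>k<n. s !! k)"
  by (induct n) (simp_all add: stake_Suc del: stake.simps(2))

lemma walk_pos_stake: "k \<le> n \<Longrightarrow> walk_pos x s k = x + sum_list (take k (stake n s))"
  by (simp add: take_stake min_absorb1 sum_list_stake walk_pos_def)

lemma space_steps: "space (steps_space :: (int^'d::finite) stream measure) = UNIV"
  unfolding steps_space_def by (simp add: space_stream_space)

lemma stake_meas: "stake n \<in> measurable (steps_space :: (int^'d::finite) stream measure) (count_space UNIV)"
proof -
  have "sets (stream_space (measure_pmf (step_pmf :: (int^'d) pmf))) = sets (stream_space (count_space UNIV))"
    by (rule sets_stream_space_cong) simp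
  then show ?thesis unfolding steps_space_def
    using measurable_stake[where 'a="int^'d"] measurable_cong_sets by blast
qed

lemma meas_stake_fun:
  assumes "\<And>s. g s = G (stake n s)" "G \<in> UNIV \<rightarrow> space N"
  shows "g \<in> measurable (steps_space :: (int^'d::finite) stream measure) N"
proof -
  have "g = G \<circ> stake n" using assms by auto
  moreover have "G \<in> measurable (count_space UNIV) N" using assms(2) by simp
  ultimately show ?thesis using measurable_comp[OF stake_meas] by metis
qed

lemma occ_stake: "occ B x s n = (\<Sum>k<n. if x + sum_list (take k (stake n s)) \<in> B then 1 else 0)"
  unfolding occ_def
proof (rule sum.cong)
  fix k assume "k \<in> {..<n}"
  then have "walk_pos x s k = x + sum_list (take k (stake n s))" by (intro walk_pos_stake) simp
  then show "(if walk_pos x s k \<in> B then 1 else 0) = (if x + sum_list (take k (stake n s)) \<in> B then 1 else (0::nat))"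
    by simp
qed simp

lemma meas_integrand:
  "(\<lambda>s. H (occ B x s n) (walk_pos x s n)) \<in> measurable (steps_space :: (int^'d::finite) stream measure) N"
  if "H \<in> UNIV \<rightarrow> UNIV \<rightarrow> space N"
  apply (rule meas_stake_fun[where n=n and G="\<lambda>l. H (\<Sum>k<n. if x + sum_list (take k l) \<in> B then 1 else 0) (x + sum_list (take n l))"])
  using that by (auto simp: occ_stake walk_pos_stake[of n n])

definition Pop :: "(int^'d::finite \<Rightarrow> real) \<Rightarrow> int^'d \<Rightarrow> real" where
  "Pop F x = (\<Sum>i\<in>UNIV. F (x + axis i 1) + F (x + axis i (-1))) / (2 * real CARD('d))"

lemma steps_stream: "steps_space = stream_space (measure_pmf step_pmf)"
  by (simp add: steps_space_def)

lemma supermart: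
  fixes F :: "int^'d::finite \<Rightarrow> real" and B :: "(int^'d) set" and \<mu> :: real
  assumes F0: "\<And>y. F y \<ge> 0"
    and SM: "\<And>y. exp (\<mu> * (if y \<in> B then 1 else 0)) * Pop F y \<le> F y"
  shows "(\<integral>\<^sup>+s. ennreal (exp (\<mu> * real (occ B x s n)) * F (walk_pos x s n)) \<partial>steps_space) \<le> ennreal (F x)"
proof (induction n arbitrary: x)
  case 0
  interpret prob_space "steps_space :: (int^'d) stream measure" by (rule prob_space_steps)
  show ?case by (simp add: emeasure_space_1)
next
  case (Suc n)
  define c where "c = exp (\<mu> * (if x \<in> B then 1 else 0))"
  have c0: "c \<ge> 0" unfolding c_def by simp
  have meas: "(\<lambda>s. ennreal (exp (\<mu> * real (occ B y s m)) * F (walk_pos y s m))) \<in> borel_measurable steps_space" for y m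
    by (rule meas_integrand[where H="\<lambda>k p. ennreal (exp (\<mu> * real k) * F p)"]) simp
  have "(\<integral>\<^sup>+s. ennreal (exp (\<mu> * real (occ B x s (Suc n))) * F (walk_pos x s (Suc n))) \<partial>steps_space)
     = (\<integral>\<^sup>+e. (\<integral>\<^sup>+s. ennreal (exp (\<mu> * real (occ B x (e ## s) (Suc n))) * F (walk_pos x (e ## s) (Suc n))) \<partial>steps_space) \<partial>measure_pmf step_pmf)"
    unfolding steps_stream by (rule prob_space.nn_integral_stream_space[OF prob_space_measure_pmf]) (use meas[unfolded steps_stream] in auto)
  also have "\<dots> = (\<integral>\<^sup>+e. ennreal c * (\<integral>\<^sup>+s. ennreal (exp (\<mu> * real (occ B (x+e) s n)) * F (walk_pos (x+e) s n)) \<partial>steps_space) \<partial>measure_pmf step_pmf)"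
  proof (rule nn_integral_cong)
    fix e
    have "(\<integral>\<^sup>+s. ennreal (exp (\<mu> * real (occ B x (e ## s) (Suc n))) * F (walk_pos x (e ## s) (Suc n))) \<partial>steps_space)
       = (\<integral>\<^sup>+s. ennreal c * ennreal (exp (\<mu> * real (occ B (x+e) s n)) * F (walk_pos (x+e) s n)) \<partial>steps_space)"
      by (rule nn_integral_cong)
         (simp add: occ_Suc walk_pos_Suc c_def ennreal_mult[symmetric] F0 exp_add[symmetric] distrib_left mult.assoc)
    also have "\<dots> = ennreal c * (\<integral>\<^sup>+s. ennreal (exp (\<mu> * real (occ B (x+e) s n)) * F (walk_pos (x+e) s n)) \<partial>steps_space)"
      by (rule nn_integral_cmult) (rule meas)
    finally show "(\<integral>\<^sup>+s. ennreal (exp (\<mu> * real (occ B x (e ## s) (Suc n))) * F (walk_pos x (e ## s) (Suc n))) \<partial>steps_space)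
       = ennreal c * (\<integral>\<^sup>+s. ennreal (exp (\<mu> * real (occ B (x+e) s n)) * F (walk_pos (x+e) s n)) \<partial>steps_space)" .
  qed
  also have "\<dots> \<le> (\<integral>\<^sup>+e. ennreal (c * F (x + e)) \<partial>measure_pmf step_pmf)"
  proof (rule nn_integral_mono)
    fix e
    show "ennreal c * (\<integral>\<^sup>+s. ennreal (exp (\<mu> * real (occ B (x+e) s n)) * F (walk_pos (x+e) s n)) \<partial>steps_space)
        \<le> ennreal (c * F (x + e))"
      unfolding ennreal_mult[OF c0 F0] by (rule mult_left_mono[OF Suc.IH]) simp
  qed
  also have "\<dots> = ennreal ((\<Sum>i\<in>UNIV. c * F (x + axis i 1) + c * F (x + axis i (-1))) / (2 * CARD('d)))"
    by (rule nn_integral_step) (use c0 F0 in simp)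
  also have "\<dots> = ennreal (c * Pop F x)"
    unfolding Pop_def by (simp add: sum_distrib_left distrib_left)
  also have "\<dots> \<le> ennreal (F x)"
    using SM[of x] unfolding c_def by (intro ennreal_leI) simp
  finally show ?case .
qed



lemma finite_range_cover:
  fixes g :: "nat \<Rightarrow> 'a"
  assumes "finite K" "K \<subseteq> range g"
  shows "\<exists>n. K \<subseteq> g ` {..<n}"
proof -
  from assms(2) have "\<forall>y\<in>K. \<exists>k. g k = y" by auto
  then obtain f where f: "\<forall>y\<in>K. g (f y) = y" by metis
  define n where "n = Suc (\<Sum>y\<in>K. f y)"
  have "K \<subseteq> g ` {..<n}"
  proof
    fix y assume y: "y \<in> K"
    have "f y \<le> (\<Sum>y\<in>K. f y)" using y assms(1) by (intro member_le_sum) auto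
    then have "f y < n" unfolding n_def by simp
    then show "y \<in> g ` {..<n}" using f y by (metis image_eqI lessThan_iff)
  qed
  then show ?thesis ..
qed

lemma card_le_occ:
  assumes "finite B"
  shows "\<exists>n. card (walk_range x s \<inter> B) \<le> occ B x s n"
proof -
  obtain n where n: "walk_range x s \<inter> B \<subseteq> walk_pos x s ` {..<n}"
    using finite_range_cover[of "walk_range x s \<inter> B" "walk_pos x s"] assms
    unfolding walk_range_def by auto
  have "walk_range x s \<inter> B \<subseteq> walk_pos x s ` {k\<in>{..<n}. walk_pos x s k \<in> B}"
    using n by auto
  then have "card (walk_range x s \<inter> B) \<le> card (walk_pos x s ` {k\<in>{..<n}. walk_pos x s k \<in> B})"
    by (intro card_mono) auto
  also have "\<dots> \<le> card {k\<in>{..<n}. walk_pos x s k \<in> B}" by (rule card_image_le) simp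
  finally show ?thesis unfolding occ_card by blast
qed

lemma tail:
  fixes F :: "int^'d::finite \<Rightarrow> real" and B :: "(int^'d) set" and \<mu> T :: real
  assumes F1: "\<And>y. F y \<ge> 1"
    and SM: "\<And>y. exp (\<mu> * (if y \<in> B then 1 else 0)) * Pop F y \<le> F y"
    and mu0: "\<mu> \<ge> 0" and finB: "finite B"
    and Ssub: "S \<subseteq> {s. T \<le> real (card (walk_range x s \<inter> B))}"
  shows "emeasure steps_space S \<le> ennreal (exp (-\<mu>*T) * F x)"
proof -
  have F0: "\<And>y. F y \<ge> 0" using F1 by (meson dual_order.trans zero_le_one)
  define E where "E = (\<lambda>n. {s. T \<le> real (occ B x s n)})"
  have Esets: "E n \<in> sets (steps_space :: (int^'d) stream measure)" for n
  proof -
    have "(\<lambda>s. T \<le> real (occ B x s n)) \<in> measurable (steps_space :: (int^'d) stream measure) (count_space UNIV)"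
      by (rule meas_integrand[where H="\<lambda>k p. T \<le> real k"]) simp
    then have "{s \<in> space steps_space. T \<le> real (occ B x s n)} \<in> sets (steps_space :: (int^'d) stream measure)"
      by (rule predE)
    then show ?thesis unfolding E_def space_steps by simp
  qed
  have inc: "incseq E"
  proof (rule incseq_SucI)
    fix n show "E n \<subseteq> E (Suc n)"
      unfolding E_def using occ_mono[of n "Suc n" B x] by (auto intro: order_trans)
  qed
  have sub: "{s. T \<le> real (card (walk_range x s \<inter> B))} \<subseteq> (\<Union>n. E n)"
  proof
    fix s assume "s \<in> {s. T \<le> real (card (walk_range x s \<inter> B))}"
    moreover obtain n where "card (walk_range x s \<inter> B) \<le> occ B x s n" using card_le_occ[OF finB] by blast
    ultimately have "s \<in> E n" unfolding E_def by auto
    then show "s \<in> (\<Union>n. E n)" by blast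
  qed
  have bnd: "emeasure steps_space (E n) \<le> ennreal (exp (-\<mu>*T) * F x)" for n
  proof -
    have meas: "(\<lambda>s. ennreal (exp (\<mu> * real (occ B x s n)) * F (walk_pos x s n))) \<in> borel_measurable steps_space"
      by (rule meas_integrand[where H="\<lambda>k p. ennreal (exp (\<mu> * real k) * F p)"]) simp
    have "emeasure steps_space (E n) = (\<integral>\<^sup>+s. indicator (E n) s \<partial>steps_space)"
      using Esets by simp
    also have "\<dots> \<le> (\<integral>\<^sup>+s. ennreal (exp (-\<mu>*T)) * ennreal (exp (\<mu> * real (occ B x s n)) * F (walk_pos x s n)) \<partial>steps_space)"
    proof (rule nn_integral_mono)
      fix s
      show "indicator (E n) s \<le> ennreal (exp (-\<mu>*T)) * ennreal (exp (\<mu> * real (occ B x s n)) * F (walk_pos x s n))"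
      proof (cases "s \<in> E n")
        case True
        then have "T \<le> real (occ B x s n)" unfolding E_def by simp
        then have "0 \<le> -\<mu>*T + \<mu> * real (occ B x s n)" using mu0 mult_left_mono[of T "real (occ B x s n)" \<mu>] by (simp add: algebra_simps)
        then have "1 \<le> exp (-\<mu>*T + \<mu> * real (occ B x s n))" by simp
        then have "1*1 \<le> exp (-\<mu>*T + \<mu> * real (occ B x s n)) * F (walk_pos x s n)"
          using F1[of "walk_pos x s n"] by (intro mult_mono) auto
        then have "1 \<le> exp (-\<mu>*T) * exp (\<mu> * real (occ B x s n)) * F (walk_pos x s n)"
          by (simp add: exp_add[symmetric])
        then have "ennreal 1 \<le> ennreal (exp (-\<mu>*T) * exp (\<mu> * real (occ B x s n)) * F (walk_pos x s n))"
          by (rule ennreal_leI)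
        also have "\<dots> = ennreal (exp (-\<mu>*T)) * ennreal (exp (\<mu> * real (occ B x s n)) * F (walk_pos x s n))"
          by (subst ennreal_mult[symmetric]) (auto simp: F0 mult.assoc)
        finally show ?thesis using True by simp
      qed simp
    qed
    also have "\<dots> = ennreal (exp (-\<mu>*T)) * (\<integral>\<^sup>+s. ennreal (exp (\<mu> * real (occ B x s n)) * F (walk_pos x s n)) \<partial>steps_space)"
      by (rule nn_integral_cmult) (rule meas)
    also have "\<dots> \<le> ennreal (exp (-\<mu>*T)) * ennreal (F x)"
      by (rule mult_left_mono[OF supermart[OF F0 SM]]) simp
    also have "\<dots> = ennreal (exp (-\<mu>*T) * F x)" using F0 by (simp add: ennreal_mult)
    finally show ?thesis .
  qed
  have "emeasure steps_space S \<le> emeasure steps_space (\<Union>n. E n)"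
    by (rule emeasure_mono) (use Esets Ssub sub in auto)
  also have "\<dots> = (SUP n. emeasure steps_space (E n))"
    by (rule SUP_emeasure_incseq[symmetric]) (use Esets inc in auto)
  also have "\<dots> \<le> ennreal (exp (-\<mu>*T) * F x)"
    by (rule SUP_least) (rule bnd)
  finally show ?thesis .
qed



lemma box_sub: "box_Zd r \<subseteq> {x::int^'d::finite. \<forall>i. x $ i \<in> {-\<lceil>r\<rceil>..<\<lceil>r\<rceil>}}"
proof
  fix x :: "int^'d" assume "x \<in> box_Zd r"
  then have h: "- r \<le> real_of_int (x $ i) \<and> real_of_int (x $ i) < r" for i unfolding box_Zd_def by auto
  show "x \<in> {x::int^'d::finite. \<forall>i. x $ i \<in> {-\<lceil>r\<rceil>..<\<lceil>r\<rceil>}}"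
  proof (clarify)
    fix i
    from h[of i] have "- r \<le> real_of_int (x $ i)" "real_of_int (x $ i) < r" by auto
    then have "-\<lceil>r\<rceil> \<le> x $ i" "x $ i < \<lceil>r\<rceil>" by linarith+
    then show "x $ i \<in> {-\<lceil>r\<rceil>..<\<lceil>r\<rceil>}" by simp
  qed
qed

lemma card_cube:
  fixes I :: "int set"
  assumes "finite I"
  shows "card {x::int^'d::finite. \<forall>i. x $ i \<in> I} = card I ^ CARD('d)"
proof -
  have "bij_betw vec_nth {x::int^'d. \<forall>i. x $ i \<in> I} (PiE (UNIV :: 'd set) (\<lambda>_. I))"
    by (intro bij_betwI[of _ _ _ vec_lambda]) (auto simp: vec_eq_iff PiE_def extensional_def)
  then have "card {x::int^'d. \<forall>i. x $ i \<in> I} = card (PiE (UNIV :: 'd set) (\<lambda>_. I))"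
    by (rule bij_betw_same_card)
  also have "\<dots> = card I ^ CARD('d)" by (subst card_PiE) auto
  finally show ?thesis .
qed

lemma finite_cube:
  fixes I :: "int set"
  assumes "finite I"
  shows "finite {x::int^'d::finite. \<forall>i. x $ i \<in> I}"
proof -
  have "bij_betw vec_nth {x::int^'d. \<forall>i. x $ i \<in> I} (PiE (UNIV :: 'd set) (\<lambda>_. I))"
    by (intro bij_betwI[of _ _ _ vec_lambda]) (auto simp: vec_eq_iff PiE_def extensional_def)
  moreover have "finite (PiE (UNIV :: 'd set) (\<lambda>_. I))" using assms by (intro finite_PiE) auto
  ultimately show ?thesis using bij_betw_finite by blast
qed

lemma finite_box: "finite (box_Zd r :: (int^'d::finite) set)"
  by (rule finite_subset[OF box_sub finite_cube]) simp

lemma card_box: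
  assumes "r \<ge> 0"
  shows "real (card (box_Zd r :: (int^'d::finite) set)) \<le> (2*r + 2) ^ CARD('d)"
proof -
  have "card (box_Zd r :: (int^'d) set) \<le> card {x::int^'d::finite. \<forall>i. x $ i \<in> {-\<lceil>r\<rceil>..<\<lceil>r\<rceil>}}"
    by (rule card_mono[OF finite_cube box_sub]) simp
  also have "\<dots> = nat (2*\<lceil>r\<rceil>) ^ CARD('d)" by (subst card_cube) auto
  finally have "real (card (box_Zd r :: (int^'d) set)) \<le> real (nat (2*\<lceil>r\<rceil>)) ^ CARD('d)"
    by (metis of_nat_le_iff of_nat_power)
  also have "\<dots> \<le> (2*r + 2) ^ CARD('d)"
  proof (rule power_mono)
    have "\<lceil>r\<rceil> \<ge> 0" using assms by simp
    then have "real (nat (2*\<lceil>r\<rceil>)) = 2 * real_of_int \<lceil>r\<rceil>" by simp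
    then show "real (nat (2*\<lceil>r\<rceil>)) \<le> 2*r + 2" by linarith
  qed simp
  finally show ?thesis .
qed

lemma box_nsq:
  fixes x :: "int^'d::finite"
  assumes "x \<in> box_Zd r" "r \<ge> 0"
  shows "nsq x \<le> real CARD('d) * r^2"
proof -
  have "(real_of_int (x $ i))^2 \<le> r^2" for i
  proof -
    from assms have "- r \<le> real_of_int (x $ i)" "real_of_int (x $ i) < r" unfolding box_Zd_def by auto
    then have "\<bar>real_of_int (x $ i)\<bar> \<le> \<bar>r\<bar>" by linarith
    then show ?thesis by (simp add: abs_le_square_iff)
  qed
  then have "nsq x \<le> (\<Sum>i\<in>(UNIV::'d set). r^2)" unfolding nsq_def by (intro sum_mono) auto
  then show ?thesis by simp
qed

lemma escape_le1: "escape_prob K x \<le> 1"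
proof -
  interpret prob_space "steps_space :: (int^'d::finite) stream measure" by (rule prob_space_steps)
  show ?thesis unfolding escape_prob_def by simp
qed

lemma escape_ge0: "escape_prob K x \<ge> 0"
  unfolding escape_prob_def by simp

lemma cap_le_card: "cap (K :: (int^'d::finite) set) \<le> real (card K)"
proof -
  have "cap K \<le> (\<Sum>x\<in>K. 1)" unfolding cap_def equilibrium_def
    by (intro sum_mono) (auto simp: escape_le1)
  then show ?thesis by simp
qed

lemma cap_ge0: "cap (K :: (int^'d::finite) set) \<ge> 0"
  unfolding cap_def equilibrium_def by (intro sum_nonneg) (auto simp: escape_ge0)



definition Fly :: "real \<Rightarrow> int^'d::finite \<Rightarrow> real" where
  "Fly a y = 1 + a / (a + nsq y)"

lemma Pop_Fly: fixes y :: "int^'d::finite" shows "Pop (Fly a) y = 1 + a * Pop (\<lambda>y. 1 / (a + nsq y)) y"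
proof -
  have "Pop (Fly a) y = (2 * real CARD('d) + a * (\<Sum>i\<in>UNIV. 1/(a + nsq (y + axis i 1)) + 1/(a + nsq (y + axis i (-1))))) / (2 * real CARD('d))"
    unfolding Pop_def Fly_def by (simp add: sum.distrib sum_distrib_left distrib_left)
  also have "\<dots> = 1 + a * Pop (\<lambda>y. 1 / (a + nsq y)) y"
    unfolding Pop_def by (simp add: field_simps)
  finally show ?thesis .
qed

lemma SM_Fly:
  fixes L :: real and y :: "int^'d::finite"
  assumes D5: "real CARD('d) \<ge> 5" and L0: "L > 0"
  defines "D \<equiv> real CARD('d)"
  defines "a \<equiv> 4*L^2 + D"
  defines "\<mu> \<equiv> 1 / (8*D*(D+1)^3*a)"
  shows "exp (\<mu> * (if y \<in> box_Zd (2*L) then 1 else 0)) * Pop (Fly a) y \<le> Fly a y"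
proof -
  have Dpos: "D \<ge> 5" using D5 unfolding D_def .
  have aD: "a \<ge> D" unfolding a_def by simp
  have apos: "a > 0" using aD Dpos by linarith
  define s where "s = a + nsq y"
  have sa: "s \<ge> a" unfolding s_def using nsq_nonneg by simp
  have Ph: "Pop (\<lambda>y. 1 / (a + nsq y)) y \<le> 1/s - 2*a/(D*(s+1)^3)"
    unfolding Pop_def s_def D_def using Ph_bound[of a y] D5 aD unfolding D_def by simp
  have Fy: "Fly a y = 1 + a/s" unfolding Fly_def s_def ..
  have dec: "Pop (Fly a) y \<le> Fly a y - 2*a^2/(D*(s+1)^3)"
  proof -
    have "Pop (Fly a) y \<le> 1 + a * (1/s - 2*a/(D*(s+1)^3))"
      unfolding Pop_Fly using Ph apos by (simp add: mult_left_mono)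
    also have "\<dots> = Fly a y - 2*a^2/(D*(s+1)^3)" unfolding Fy by (simp add: field_simps power2_eq_square)
    finally show ?thesis .
  qed
  have dec0: "2*a^2/(D*(s+1)^3) \<ge> 0" using Dpos sa apos by simp
  have F2: "Fly a y \<le> 2" "Fly a y \<ge> 1" unfolding Fy using sa apos by (auto simp: field_simps)
  show ?thesis
  proof (cases "y \<in> box_Zd (2*L)")
    case False then show ?thesis using dec dec0 by simp
  next
    case True
    have "nsq y \<le> D * (2*L)^2" using box_nsq[OF True] L0 unfolding D_def by simp
    moreover have "D * (2*L)^2 \<le> D * a" unfolding a_def using Dpos by (intro mult_left_mono) (auto simp: power2_eq_square)
    ultimately have "s \<le> (D+1)*a" unfolding s_def by (simp add: algebra_simps)
    moreover have "s + 1 \<le> 2 * s" using sa aD Dpos by linarith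
    ultimately have s1: "s + 1 \<le> 2*(D+1)*a" by linarith
    have "(s+1)^3 \<le> (2*(D+1)*a)^3" using s1 sa apos by (intro power_mono) auto
    then have "2*a^2/(D*(2*(D+1)*a)^3) \<le> 2*a^2/(D*(s+1)^3)"
      using Dpos sa apos by (intro divide_left_mono mult_pos_pos mult_left_mono) auto
    moreover have "2*a^2/(D*(2*(D+1)*a)^3) = 2*\<mu>"
    proof -
      have nz: "a \<noteq> 0" "D \<noteq> 0" "D + 1 \<noteq> 0" using apos Dpos by auto
      have "2*a^2/(D*(2*(D+1)*a)^3) = (2*a^2)/(a^2 * (8*D*(D+1)^3*a))"
        by (simp add: power_mult_distrib power2_eq_square power3_eq_cube algebra_simps)
      also have "\<dots> = 2/(8*D*(D+1)^3*a)" using nz by simp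
      finally show ?thesis unfolding \<mu>_def by simp
    qed
    ultimately have dec2: "Pop (Fly a) y \<le> Fly a y - 2*\<mu>" using dec by linarith
    have mu0: "\<mu> \<ge> 0" unfolding \<mu>_def using apos Dpos by simp
    have "Fly a y - 2*\<mu> \<le> Fly a y * (1 - \<mu>)" using F2 mu0 mult_left_mono[of "Fly a y" 2 \<mu>] by (simp add: algebra_simps)
    also have "\<dots> \<le> Fly a y * exp (-\<mu>)" using F2 by (intro mult_left_mono) (auto simp: exp_ge_add_one_self[of "-\<mu>"] intro: order_trans[OF _ exp_ge_add_one_self])
    finally have "exp \<mu> * Pop (Fly a) y \<le> exp \<mu> * (Fly a y * exp (-\<mu>))" using dec2 by simp
    also have "\<dots> = Fly a y" by (simp add: exp_minus field_simps)
    finally show ?thesis using True by simp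
  qed
qed

lemma single_path:
  fixes L T :: real and x :: "int^'d::finite"
  assumes D5: "real CARD('d) \<ge> 5" and L0: "L > 0"
  defines "D \<equiv> real CARD('d)"
  defines "\<mu> \<equiv> 1 / (8*D*(D+1)^3*(4*L^2 + D))"
  shows "emeasure steps_space {s. T \<le> cap (walk_range x s \<inter> box_Zd (2*L))} \<le> ennreal (2 * exp (-\<mu>*T))"
proof -
  define a where "a = 4*L^2 + D"
  have aD: "a \<ge> D" unfolding a_def by simp
  have F1: "Fly a y \<ge> 1" "Fly a y \<le> 2" for y
    unfolding Fly_def using aD D5 nsq_nonneg[of y] unfolding D_def by (auto simp: field_simps)
  have mu0: "\<mu> \<ge> 0" unfolding \<mu>_def D_def by simp
  have "emeasure steps_space {s. T \<le> cap (walk_range x s \<inter> box_Zd (2*L))} \<le> ennreal (exp (-\<mu>*T) * Fly a x)"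
  proof (rule tail[where B="box_Zd (2*L)"])
    show "\<And>y. 1 \<le> Fly a y" by (rule F1)
    show "exp (\<mu> * (if y \<in> box_Zd (2 * L) then 1 else 0)) * Pop (Fly a) y \<le> Fly a y" for y :: "int^'d"
      using SM_Fly[OF D5 L0, of y] unfolding \<mu>_def a_def D_def by simp
    show "0 \<le> \<mu>" by (rule mu0)
    show "finite (box_Zd (2 * L) :: (int^'d) set)" by (rule finite_box)
    show "{s. T \<le> cap (walk_range x s \<inter> box_Zd (2 * L))} \<subseteq> {s. T \<le> real (card (walk_range x s \<inter> box_Zd (2 * L)))}"
      using cap_le_card by (auto intro: order_trans)
  qed
  also have "\<dots> \<le> ennreal (2 * exp (-\<mu>*T))"
    using F1[of x] by (intro ennreal_leI) (simp add: mult.commute mult_left_mono)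
  finally show ?thesis .
qed



lemma walk_meas[measurable]: "(\<lambda>s. walk_pos y s k) \<in> measurable (steps_space :: (int^'d::finite) stream measure) (count_space UNIV)"
  by (rule meas_stake_fun[where n=k and G="\<lambda>l. y + sum_list (take k l)"]) (auto simp: walk_pos_def sum_list_stake)

lemma hit_meas: "{s. \<exists>k\<le>n. walk_pos y s k \<in> B} \<in> sets (steps_space :: (int^'d::finite) stream measure)"
proof -
  have "Measurable.pred (steps_space :: (int^'d) stream measure) (\<lambda>s. \<exists>k\<le>n. walk_pos y s k \<in> B)"
    by measurable
  then have "{s \<in> space steps_space. \<exists>k\<le>n. walk_pos y s k \<in> B} \<in> sets (steps_space :: (int^'d) stream measure)" by (rule predE)
  then show ?thesis by (simp add: space_steps)
qed

lemma nohit_meas: "{s. \<forall>k. walk_pos y s k \<notin> B} \<in> sets (steps_space :: (int^'d::finite) stream measure)"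
proof -
  have "Measurable.pred (steps_space :: (int^'d) stream measure) (\<lambda>s. \<forall>k. walk_pos y s k \<notin> B)"
    by measurable
  then have "{s \<in> space steps_space. \<forall>k. walk_pos y s k \<notin> B} \<in> sets (steps_space :: (int^'d) stream measure)" by (rule predE)
  then show ?thesis by (simp add: space_steps)
qed

lemma emeasure_first_step:
  assumes "X \<in> sets (steps_space :: (int^'d::finite) stream measure)"
  shows "emeasure steps_space X = (\<integral>\<^sup>+t. emeasure steps_space {x. t ## x \<in> X} \<partial>measure_pmf (step_pmf :: (int^'d) pmf))"
  using prob_space.emeasure_stream_space[OF prob_space_measure_pmf, of X "step_pmf :: (int^'d) pmf"] assms
  unfolding steps_space_def[symmetric] by (simp add: space_steps)

lemma steps_le1: "emeasure (steps_space :: (int^'d::finite) stream measure) X \<le> 1"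
proof -
  interpret prob_space "steps_space :: (int^'d) stream measure" by (rule prob_space_steps)
  show ?thesis by (rule emeasure_le_1)
qed

lemma ex_le_Suc_split:
  "(\<exists>k\<le>Suc n. walk_pos y (t ## x) k \<in> B) \<longleftrightarrow> y \<in> B \<or> (\<exists>k\<le>n. walk_pos (y + t) x k \<in> B)"
proof
  assume "\<exists>k\<le>Suc n. walk_pos y (t ## x) k \<in> B"
  then obtain k where k: "k \<le> Suc n" "walk_pos y (t ## x) k \<in> B" by blast
  show "y \<in> B \<or> (\<exists>k\<le>n. walk_pos (y + t) x k \<in> B)"
  proof (cases k)
    case 0 then show ?thesis using k by simp
  next
    case (Suc k') then show ?thesis using k by (auto simp: walk_pos_Suc)
  qed
next
  assume "y \<in> B \<or> (\<exists>k\<le>n. walk_pos (y + t) x k \<in> B)"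
  then show "\<exists>k\<le>Suc n. walk_pos y (t ## x) k \<in> B"
  proof
    assume "y \<in> B" then show ?thesis by (intro exI[of _ 0]) simp
  next
    assume "\<exists>k\<le>n. walk_pos (y + t) x k \<in> B"
    then obtain k where "k \<le> n" "walk_pos (y + t) x k \<in> B" by blast
    then show ?thesis by (intro exI[of _ "Suc k"]) (simp add: walk_pos_Suc)
  qed
qed

lemma hit_bound:
  fixes h :: "int^'d::finite \<Rightarrow> real" and B :: "(int^'d) set" and c :: real
  assumes hsup: "\<And>y. Pop h y \<le> h y" and h0: "\<And>y. h y \<ge> 0"
    and hB: "\<And>y. y \<in> B \<Longrightarrow> h y \<ge> c" and c0: "c > 0"
  shows "emeasure steps_space {s. \<exists>k\<le>n. walk_pos y s k \<in> B} \<le> ennreal (h y / c)"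
proof (induction n arbitrary: y)
  case 0
  show ?case
  proof (cases "y \<in> B")
    case True
    then have "1 \<le> h y / c" using hB c0 by simp
    then have "(1::ennreal) \<le> ennreal (h y / c)" by (subst ennreal_1[symmetric]) (rule ennreal_leI)
    then show ?thesis by (rule order_trans[OF steps_le1])
  next
    case False then show ?thesis by simp
  qed
next
  case (Suc n)
  show ?case
  proof (cases "y \<in> B")
    case True
    then have "1 \<le> h y / c" using hB c0 by simp
    then have "(1::ennreal) \<le> ennreal (h y / c)" by (subst ennreal_1[symmetric]) (rule ennreal_leI)
    then show ?thesis by (rule order_trans[OF steps_le1])
  next
    case False
    have "emeasure steps_space {s. \<exists>k\<le>Suc n. walk_pos y s k \<in> B}
        = (\<integral>\<^sup>+t. emeasure steps_space {x. \<exists>k\<le>n. walk_pos (y + t) x k \<in> B} \<partial>measure_pmf step_pmf)"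
      by (subst emeasure_first_step[OF hit_meas]) (simp add: ex_le_Suc_split False)
    also have "\<dots> \<le> (\<integral>\<^sup>+t. ennreal (h (y + t) / c) \<partial>measure_pmf step_pmf)"
      by (rule nn_integral_mono) (rule Suc.IH)
    also have "\<dots> = ennreal ((\<Sum>i\<in>UNIV. h (y + axis i 1) / c + h (y + axis i (-1)) / c) / (2 * CARD('d)))"
      by (rule nn_integral_step) (use h0 c0 in simp)
    also have "\<dots> = ennreal (Pop h y / c)"
      unfolding Pop_def by (simp add: add_divide_distrib[symmetric] sum_divide_distrib[symmetric] field_simps)
    also have "\<dots> \<le> ennreal (h y / c)"
      using hsup[of y] c0 by (intro ennreal_leI divide_right_mono) auto
    finally show ?thesis .
  qed
qed



lemma step_ge:
  assumes "e \<in> (unit_steps :: (int^'d::finite) set)"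
  shows "f e \<le> of_nat (2 * CARD('d)) * (\<integral>\<^sup>+t. f t \<partial>measure_pmf (step_pmf :: (int^'d) pmf))"
proof -
  have "(\<integral>\<^sup>+t. f t \<partial>measure_pmf (step_pmf :: (int^'d) pmf)) = sum f unit_steps / of_nat (card (unit_steps :: (int^'d) set))"
    unfolding step_pmf_def by (rule nn_integral_pmf_of_set[OF unit_steps_ne finite_unit_steps])
  then have "of_nat (2 * CARD('d)) * (\<integral>\<^sup>+t. f t \<partial>measure_pmf (step_pmf :: (int^'d) pmf)) = sum f unit_steps"
    unfolding card_unit_steps
    by (simp add: ennreal_times_divide mult.commute[of "of_nat (2 * CARD('d))"] mult_divide_eq_ennreal del: of_nat_mult)
  moreover have "f e \<le> sum f unit_steps" using assms finite_unit_steps by (intro member_le_sum) auto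
  ultimately show ?thesis by simp
qed

definition NHe :: "(int^'d::finite) set \<Rightarrow> int^'d \<Rightarrow> ennreal" where
  "NHe B z = emeasure steps_space {s. \<forall>k. walk_pos z s k \<notin> B}"

lemma all_Suc_split:
  "(\<forall>k. walk_pos z (t ## x) k \<notin> B) \<longleftrightarrow> z \<notin> B \<and> (\<forall>k. walk_pos (z + t) x k \<notin> B)"
proof
  assume a: "\<forall>k. walk_pos z (t ## x) k \<notin> B"
  have "z \<notin> B" using a[rule_format, of 0] by simp
  moreover have "walk_pos (z + t) x k \<notin> B" for k using a[rule_format, of "Suc k"] by (simp add: walk_pos_Suc)
  ultimately show "z \<notin> B \<and> (\<forall>k. walk_pos (z + t) x k \<notin> B)" by blast
next
  assume a: "z \<notin> B \<and> (\<forall>k. walk_pos (z + t) x k \<notin> B)"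
  show "\<forall>k. walk_pos z (t ## x) k \<notin> B"
  proof
    fix k show "walk_pos z (t ## x) k \<notin> B" using a by (cases k) (auto simp: walk_pos_Suc)
  qed
qed

lemma nh_step:
  assumes "z \<notin> B" "e \<in> unit_steps"
  shows "NHe B (z + e) \<le> of_nat (2 * CARD('d)) * NHe B (z :: int^'d::finite)"
proof -
  have "NHe B z = (\<integral>\<^sup>+t. NHe B (z + t) \<partial>measure_pmf (step_pmf :: (int^'d) pmf))"
    unfolding NHe_def by (subst emeasure_first_step[OF nohit_meas]) (simp add: all_Suc_split assms)
  then show ?thesis using step_ge[OF assms(2), of "\<lambda>t. NHe B (z + t)"] by simp
qed

lemma esc_step:
  assumes "e \<in> unit_steps"
  shows "NHe B (x + e) \<le> of_nat (2 * CARD('d)) * emeasure steps_space {s. \<forall>n>0. walk_pos (x :: int^'d::finite) s n \<notin> B}"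
proof -
  have meas: "{s. \<forall>n>0. walk_pos x s n \<notin> B} \<in> sets (steps_space :: (int^'d) stream measure)"
  proof -
    have "Measurable.pred (steps_space :: (int^'d) stream measure) (\<lambda>s. \<forall>n>0. walk_pos x s n \<notin> B)"
      by measurable
    then have "{s \<in> space steps_space. \<forall>n>0. walk_pos x s n \<notin> B} \<in> sets (steps_space :: (int^'d) stream measure)" by (rule predE)
    then show ?thesis by (simp add: space_steps)
  qed
  have eq: "(\<forall>n>0. walk_pos x (t ## s) n \<notin> B) \<longleftrightarrow> (\<forall>k. walk_pos (x + t) s k \<notin> B)" for t s
    by (metis gr0_implies_Suc walk_pos_Suc zero_less_Suc)
  have "emeasure steps_space {s. \<forall>n>0. walk_pos x s n \<notin> B} = (\<integral>\<^sup>+t. NHe B (x + t) \<partial>measure_pmf (step_pmf :: (int^'d) pmf))"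
    unfolding NHe_def by (subst emeasure_first_step[OF meas]) (simp add: eq)
  then show ?thesis using step_ge[OF assms, of "\<lambda>t. NHe B (x + t)"] by simp
qed



lemma axis_add: "axis i (a::int) + axis i b = (axis i (a + b) :: int^'d::finite)"
  by (simp add: vec_eq_iff axis_nth)

lemma nsq_axis_ge: "nsq (axis i c :: int^'d::finite) \<ge> (real_of_int c)^2"
  using coord_le_nsq[of "axis i c :: int^'d" i] by (simp add: axis_nth)

lemma cap_pos:
  fixes L :: real
  assumes D5: "real CARD('d::finite) \<ge> 5" and L0: "L > 0"
  shows "cap (box_Zd (2*L) :: (int^'d) set) > 0"
proof -
  define D where "D = real CARD('d)"
  define B where "B = (box_Zd (2*L) :: (int^'d) set)"
  define a where "a = 4*L^2 + D"
  define h where "h = (\<lambda>y::int^'d. 1/(a + nsq y))"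
  define c where "c = 1/((D+1)*a)"
  have Dpos: "D \<ge> 5" using D5 unfolding D_def .
  have aD: "a \<ge> D" unfolding a_def by simp
  have apos: "a > 0" using aD Dpos by linarith
  have cpos: "c > 0" unfolding c_def using apos Dpos by simp
  have h0: "h y \<ge> 0" for y unfolding h_def using apos nsq_nonneg[of y] by simp
  have hsup: "Pop h y \<le> h y" for y
  proof -
    have "Pop h y \<le> h y - 2*a/(D*(a + nsq y + 1)^3)"
      unfolding Pop_def h_def D_def using Ph_bound[of a y] D5 aD unfolding D_def by simp
    moreover have "2*a/(D*(a + nsq y + 1)^3) \<ge> 0" using apos Dpos nsq_nonneg[of y] by simp
    ultimately show ?thesis by linarith
  qed
  have hB: "h y \<ge> c" if "y \<in> B" for y
  proof -
    have "nsq y \<le> D * (2*L)^2" using box_nsq[of y "2*L"] that L0 unfolding B_def D_def by simp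
    moreover have "D * (2*L)^2 \<le> D * a" unfolding a_def using Dpos by (intro mult_left_mono) (auto simp: power2_eq_square)
    ultimately have "a + nsq y \<le> (D+1)*a" by (simp add: algebra_simps)
    then show ?thesis unfolding h_def c_def using apos nsq_nonneg[of y]
      by (intro divide_left_mono) auto
  qed
  have hitall: "emeasure steps_space {s. \<exists>k. walk_pos z s k \<in> B} \<le> ennreal (h z / c)" for z
  proof -
    have eq: "{s. \<exists>k. walk_pos z s k \<in> B} = (\<Union>n. {s. \<exists>k\<le>n. walk_pos z s k \<in> B})" by auto
    have inc: "incseq (\<lambda>n. {s. \<exists>k\<le>n. walk_pos z s k \<in> B})"
      by (rule incseq_SucI) (auto intro: le_SucI)
    have "emeasure steps_space {s. \<exists>k. walk_pos z s k \<in> B} = (SUP n. emeasure steps_space {s. \<exists>k\<le>n. walk_pos z s k \<in> B})"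
      unfolding eq by (rule SUP_emeasure_incseq[symmetric]) (use inc hit_meas in auto)
    also have "\<dots> \<le> ennreal (h z / c)"
      by (rule SUP_least) (rule hit_bound[OF hsup h0 hB cpos])
    finally show ?thesis .
  qed
  have NH_pos: "NHe B z > 0" if "nsq z > D * a" for z
  proof -
    interpret prob_space "steps_space :: (int^'d) stream measure" by (rule prob_space_steps)
    have hz: "h z / c < 1" unfolding h_def c_def using that apos Dpos nsq_nonneg[of z]
      by (simp add: field_simps)
    have comp: "{s. \<forall>k. walk_pos z s k \<notin> B} = space steps_space - {s. \<exists>k. walk_pos z s k \<in> B}"
      by (auto simp: space_steps)
    have hm: "{s. \<exists>k. walk_pos z s k \<in> B} \<in> sets steps_space"
    proof -
      have "Measurable.pred (steps_space :: (int^'d) stream measure) (\<lambda>s. \<exists>k. walk_pos z s k \<in> B)"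
        by measurable
      then have "{s \<in> space steps_space. \<exists>k. walk_pos z s k \<in> B} \<in> sets (steps_space :: (int^'d) stream measure)" by (rule predE)
      then show ?thesis by (simp add: space_steps)
    qed
    have "measure steps_space {s. \<exists>k. walk_pos z s k \<in> B} \<le> h z / c"
      using hitall[of z] h0[of z] cpos unfolding emeasure_eq_measure by (simp add: ennreal_le_iff)
    then have "measure steps_space {s. \<forall>k. walk_pos z s k \<notin> B} > 0"
      unfolding comp using prob_compl[OF hm] hz by linarith
    then show ?thesis unfolding NHe_def emeasure_eq_measure by simp
  qed
  define i0 :: 'd where "i0 = undefined"
  define M where "M = \<lceil>2*L\<rceil> - 1"
  have M0: "M \<ge> 0" unfolding M_def using L0 by simp
  define p where "p = (\<lambda>j::nat. axis i0 (M + int j) :: int^'d)"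
  have e_unit: "axis i0 1 \<in> (unit_steps :: (int^'d) set)" unfolding unit_steps_def by auto
  have pSuc: "p j + axis i0 1 = p (Suc j)" for j unfolding p_def by (simp add: axis_add algebra_simps)
  have M0r: "real_of_int \<lceil>2*L\<rceil> - 1 \<ge> 0" using M0 unfolding M_def by linarith
  have p0B: "p 0 \<in> B"
    unfolding p_def B_def box_Zd_def using ceiling_correct[of "2*L"] by (auto simp: axis_nth M_def) (use M0r L0 in linarith)+
  have pnB: "p j \<notin> B" if "j \<ge> 1" for j
  proof
    assume "p j \<in> B"
    then have "real_of_int (p j $ i0) < 2*L" unfolding B_def box_Zd_def by auto
    moreover have "p j $ i0 = M + int j" unfolding p_def by (simp add: axis_nth)
    ultimately show False using that unfolding M_def by linarith
  qed
  have chain: "NHe B (p (K+1)) \<le> of_nat (2 * CARD('d)) ^ K * NHe B (p 1)" for K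
  proof (induction K)
    case 0 then show ?case by simp
  next
    case (Suc K)
    have "NHe B (p (Suc K + 1)) = NHe B (p (K+1) + axis i0 1)" by (simp add: pSuc)
    also have "\<dots> \<le> of_nat (2 * CARD('d)) * NHe B (p (K+1))"
      by (rule nh_step[OF pnB e_unit]) simp
    also have "\<dots> \<le> of_nat (2 * CARD('d)) * (of_nat (2 * CARD('d)) ^ K * NHe B (p 1))"
      by (rule mult_left_mono[OF Suc.IH]) simp
    finally show ?case by (simp add: mult.assoc)
  qed
  have esc: "NHe B (p 1) \<le> of_nat (2 * CARD('d)) * emeasure steps_space {s. \<forall>n>0. walk_pos (p 0) s n \<notin> B}"
    using esc_step[OF e_unit, of B "p 0"] by (simp add: pSuc)
  define K where "K = nat \<lceil>D * a\<rceil>"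
  define r where "r = real_of_int (M + int (K+1))"
  have n1: "nsq (p (K+1)) \<ge> r^2" unfolding p_def r_def by (rule nsq_axis_ge)
  have n2: "r \<ge> real (K+1)" unfolding r_def using M0 by simp
  have n3: "real (K+1) > D * a" unfolding K_def by linarith
  have "D * a \<ge> 5 * 5" using Dpos aD by (intro mult_mono) auto
  then have r1: "r \<ge> 1" using n2 n3 by linarith
  have rr: "r * 1 \<le> r * r" using r1 by (intro mult_left_mono) auto
  have "nsq (p (K+1)) > D * a" using n1 n2 n3 rr unfolding power2_eq_square by linarith
  then have "NHe B (p (K+1)) > 0" by (rule NH_pos)
  have NH1: "NHe B (p 1) \<noteq> 0"
  proof
    assume "NHe B (p 1) = 0"
    then have "NHe B (p (K+1)) \<le> 0" using chain[of K] by (metis mult_zero_right)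
    then show False using \<open>NHe B (p (K+1)) > 0\<close> not_le by blast
  qed
  have E0: "emeasure steps_space {s. \<forall>n>0. walk_pos (p 0) s n \<notin> B} \<noteq> 0"
  proof
    assume "emeasure steps_space {s. \<forall>n>0. walk_pos (p 0) s n \<notin> B} = 0"
    then have "NHe B (p 1) \<le> 0" using esc by (metis mult_zero_right)
    then show False using NH1 by (simp only: le_zero_eq)
  qed
  have epos: "escape_prob B (p 0) > 0"
  proof -
    interpret prob_space "steps_space :: (int^'d) stream measure" by (rule prob_space_steps)
    have "measure steps_space {s. \<forall>n>0. walk_pos (p 0) s n \<notin> B} \<noteq> 0"
      using E0 unfolding emeasure_eq_measure by simp
    then show ?thesis unfolding escape_prob_def space_steps
      using measure_nonneg[of steps_space "{s. \<forall>n>0. walk_pos (p 0) s n \<notin> B}"]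
      by (simp add: order.not_eq_order_implies_strict del: measure_nonneg)
  qed
  have "equilibrium B (p 0) \<le> (\<Sum>x\<in>B. equilibrium B x)"
    by (rule member_le_sum) (use p0B finite_box[of "2*L"] in \<open>simp_all add: equilibrium_def escape_ge0 B_def\<close>)
  then have "escape_prob B (p 0) \<le> cap B"
    unfolding cap_def using p0B by (simp add: equilibrium_def)
  then show ?thesis using epos unfolding B_def by simp
qed



lemma fst_count: "fst \<in> measurable (measure_pmf \<nu> \<Otimes>\<^sub>M (N :: 'b measure)) (count_space UNIV)"
proof -
  have "fst \<in> measurable (measure_pmf \<nu> \<Otimes>\<^sub>M N) (measure_pmf \<nu>)" by (rule measurable_fst)
  moreover have "measurable (measure_pmf \<nu> \<Otimes>\<^sub>M N) (measure_pmf \<nu>) = measurable (measure_pmf \<nu> \<Otimes>\<^sub>M N) (count_space UNIV)"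
    by (rule measurable_cong_sets) simp_all
  ultimately show ?thesis by simp
qed

lemma walk_pair_meas[measurable]:
  "(\<lambda>p. walk_pos (fst p) (snd p) n) \<in> measurable (measure_pmf (\<nu> :: (int^'d::finite) pmf) \<Otimes>\<^sub>M steps_space) (count_space UNIV)"
proof (rule measurable_compose_countable[where f="\<lambda>x p. walk_pos x (snd p) n" and g=fst])
  fix x :: "int^'d"
  show "(\<lambda>p. walk_pos x (snd p) n) \<in> measurable (measure_pmf \<nu> \<Otimes>\<^sub>M steps_space) (count_space UNIV)"
    by measurable
qed (rule fst_count)

lemma good_pred:
  fixes B :: "(int^'d::finite) set" and thr :: real
  assumes finB: "finite B"
  shows "Measurable.pred (measure_pmf \<nu> \<Otimes>\<^sub>M steps_space) (\<lambda>p. cap (walk_range (fst p) (snd p) \<inter> B) < thr)"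
proof -
  have eq: "(cap (walk_range (fst p) (snd p) \<inter> B) < thr) \<longleftrightarrow>
     (\<exists>K\<in>Pow B. (\<forall>y\<in>B. (y \<in> K \<longleftrightarrow> (\<exists>n. walk_pos (fst p) (snd p) n = y))) \<and> cap K < thr)" for p
  proof
    assume "cap (walk_range (fst p) (snd p) \<inter> B) < thr"
    then show "\<exists>K\<in>Pow B. (\<forall>y\<in>B. (y \<in> K \<longleftrightarrow> (\<exists>n. walk_pos (fst p) (snd p) n = y))) \<and> cap K < thr"
      by (intro bexI[of _ "walk_range (fst p) (snd p) \<inter> B"]) (auto simp: walk_range_def)
  next
    assume "\<exists>K\<in>Pow B. (\<forall>y\<in>B. (y \<in> K \<longleftrightarrow> (\<exists>n. walk_pos (fst p) (snd p) n = y))) \<and> cap K < thr"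
    then obtain K where K: "K \<subseteq> B" "\<forall>y\<in>B. (y \<in> K \<longleftrightarrow> (\<exists>n. walk_pos (fst p) (snd p) n = y))" "cap K < thr"
      by blast
    have "walk_range (fst p) (snd p) \<inter> B = K" using K(1,2) unfolding walk_range_def by (auto; metis rangeI subsetD)
    then show "cap (walk_range (fst p) (snd p) \<inter> B) < thr" using K(3) by simp
  qed
  have fP: "finite (Pow B)" using finB by simp
  have "Measurable.pred (measure_pmf \<nu> \<Otimes>\<^sub>M steps_space)
     (\<lambda>p. \<exists>K\<in>Pow B. (\<forall>y\<in>B. (y \<in> K \<longleftrightarrow> (\<exists>n. walk_pos (fst p) (snd p) n = y))) \<and> cap K < thr)"
    using fP finB by measurable
  then show ?thesis unfolding eq .
qed

lemma emeasure_snth: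
  assumes M: "prob_space M" and P: "Measurable.pred M P"
  shows "emeasure (stream_space M) {\<omega>\<in>space (stream_space M). P (\<omega> !! i)} = emeasure M {x\<in>space M. P x}"
proof (induction i)
  case 0
  interpret S: prob_space "stream_space M" by (rule prob_space.prob_space_stream_space[OF M])
  have meas: "{\<omega>\<in>space (stream_space M). P (\<omega> !! 0)} \<in> sets (stream_space M)"
    using P by measurable
  have "emeasure (stream_space M) {\<omega>\<in>space (stream_space M). P (\<omega> !! 0)}
      = (\<integral>\<^sup>+t. emeasure (stream_space M) {x\<in>space (stream_space M). t ## x \<in> {\<omega>\<in>space (stream_space M). P (\<omega> !! 0)}} \<partial>M)"
    by (rule prob_space.emeasure_stream_space[OF M meas])
  also have "\<dots> = (\<integral>\<^sup>+t. indicator {x\<in>space M. P x} t \<partial>M)"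
  proof (rule nn_integral_cong)
    fix t assume t: "t \<in> space M"
    show "emeasure (stream_space M) {x\<in>space (stream_space M). t ## x \<in> {\<omega>\<in>space (stream_space M). P (\<omega> !! 0)}} = indicator {x\<in>space M. P x} t"
      using t S.emeasure_space_1 by (cases "P t") (auto simp: stream_space_Stream)
  qed
  also have "\<dots> = emeasure M {x\<in>space M. P x}"
    using P by (intro nn_integral_indicator) measurable
  finally show ?case .
next
  case (Suc i)
  interpret S: prob_space "stream_space M" by (rule prob_space.prob_space_stream_space[OF M])
  interpret M: prob_space M by (rule M)
  have meas: "{\<omega>\<in>space (stream_space M). P (\<omega> !! Suc i)} \<in> sets (stream_space M)"
    using P by measurable
  have "emeasure (stream_space M) {\<omega>\<in>space (stream_space M). P (\<omega> !! Suc i)}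
      = (\<integral>\<^sup>+t. emeasure (stream_space M) {x\<in>space (stream_space M). t ## x \<in> {\<omega>\<in>space (stream_space M). P (\<omega> !! Suc i)}} \<partial>M)"
    by (rule prob_space.emeasure_stream_space[OF M meas])
  also have "\<dots> = (\<integral>\<^sup>+t. emeasure M {x\<in>space M. P x} \<partial>M)"
  proof (rule nn_integral_cong)
    fix t assume t: "t \<in> space M"
    have "{x\<in>space (stream_space M). t ## x \<in> {\<omega>\<in>space (stream_space M). P (\<omega> !! Suc i)}}
        = {\<omega>\<in>space (stream_space M). P (\<omega> !! i)}"
      using t by (auto simp: stream_space_Stream)
    then show "emeasure (stream_space M) {x\<in>space (stream_space M). t ## x \<in> {\<omega>\<in>space (stream_space M). P (\<omega> !! Suc i)}} = emeasure M {x\<in>space M. P x}"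
      using Suc.IH by simp
  qed
  also have "\<dots> = emeasure M {x\<in>space M. P x}"
    by (simp add: M.emeasure_space_1)
  finally show ?case .
qed



lemma poisson_mean:
  fixes r :: real
  assumes r0: "r > 0"
  shows "(\<integral>\<^sup>+N. ennreal (real N) \<partial>measure_pmf (poisson_pmf r)) = ennreal r"
proof -
  define f where "f = (\<lambda>N::nat. real N * (r ^ N / fact N * exp (-r)))"
  have fS: "f (Suc n) = r * (r^n / fact n) * exp (-r)" for n
  proof -
    have nz: "real (Suc n) \<noteq> 0" "(fact n :: real) \<noteq> 0" by simp_all
    have "f (Suc n) = real (Suc n) * (r * r ^ n / (real (Suc n) * fact n) * exp (-r))"
      unfolding f_def by (simp only: fact_Suc power_Suc of_nat_mult)
    also have "\<dots> = r * (r^n / fact n) * exp (-r)" using nz by (simp add: field_simps del: of_nat_Suc)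
    finally show ?thesis .
  qed
  have s1: "(\<lambda>n. r^n / fact n) sums exp r" using exp_converges[of r] by (simp add: divide_inverse mult.commute)
  have "(\<lambda>n. f (Suc n)) sums (r * exp r * exp (-r))"
    unfolding fS using sums_mult2[OF sums_mult[OF s1, of r], of "exp (-r)"] by simp
  then have "f sums (r * exp r * exp (-r) + f 0)" by (rule sums_Suc)
  then have fs: "f sums r" unfolding f_def by (simp add: exp_minus field_simps)
  have f0: "f N \<ge> 0" for N unfolding f_def using r0 by simp
  have "(\<integral>\<^sup>+N. ennreal (real N) \<partial>measure_pmf (poisson_pmf r)) = (\<integral>\<^sup>+N. ennreal (f N) \<partial>count_space UNIV)"
    unfolding nn_integral_measure_pmf f_def using r0
    by (intro nn_integral_cong) (simp add: ennreal_mult[symmetric] mult.commute)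
  also have "\<dots> = (\<Sum>N. ennreal (f N))" by (rule nn_integral_count_space_nat)
  also have "\<dots> = ennreal (\<Sum>N. f N)" using f0 fs by (intro suminf_ennreal2) (auto simp: sums_iff)
  also have "\<dots> = ennreal r" using fs by (simp add: sums_iff)
  finally show ?thesis .
qed



lemma main_bound:
  fixes B :: "(int^'d::finite) set" and rate pb thr :: real and \<nu> :: "(int^'d) pmf"
  assumes r0: "rate > 0" and finB: "finite B" and pb0: "pb \<ge> 0"
    and single: "\<And>x. emeasure steps_space {s. thr \<le> cap (walk_range x s \<inter> B)} \<le> ennreal pb"
  shows "measure (measure_pmf (poisson_pmf rate) \<Otimes>\<^sub>M stream_space (measure_pmf \<nu> \<Otimes>\<^sub>M steps_space))
           {(N, ws). \<forall>i<N. cap (walk_range (fst (ws !! i)) (snd (ws !! i)) \<inter> B) < thr} \<ge> 1 - rate * pb"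
proof -
  define Q where "Q = measure_pmf \<nu> \<Otimes>\<^sub>M (steps_space :: (int^'d) stream measure)"
  define S where "S = stream_space Q"
  define W where "W = measure_pmf (poisson_pmf rate) \<Otimes>\<^sub>M S"
  define good where "good = (\<lambda>p::(int^'d) \<times> (int^'d) stream. cap (walk_range (fst p) (snd p) \<inter> B) < thr)"
  have PQ: "prob_space Q" unfolding Q_def by (intro prob_space_pair prob_space_measure_pmf prob_space_steps)
  have PS: "prob_space S" unfolding S_def by (rule prob_space.prob_space_stream_space[OF PQ])
  have PW: "prob_space W" unfolding W_def by (intro prob_space_pair prob_space_measure_pmf PS)
  interpret S: prob_space S by (rule PS)
  interpret W: prob_space W by (rule PW)
  have spQ: "space Q = UNIV" unfolding Q_def by (simp add: space_pair_measure space_steps)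
  have spS: "space S = UNIV" unfolding S_def by (simp add: space_stream_space spQ)
  have spW: "space W = UNIV" unfolding W_def by (simp add: space_pair_measure spS)
  have goodP[measurable]: "Measurable.pred Q good" unfolding Q_def good_def by (rule good_pred[OF finB])
  define Cc where "Cc = {\<omega> :: nat \<times> ((int^'d) \<times> (int^'d) stream) stream. \<exists>i. i < fst \<omega> \<and> \<not> good (snd \<omega> !! i)}"
  have fstW[measurable]: "fst \<in> measurable W (count_space UNIV)"
  proof -
    have "fst \<in> measurable W (measure_pmf (poisson_pmf rate))" unfolding W_def by (rule measurable_fst)
    moreover have "measurable W (measure_pmf (poisson_pmf rate)) = measurable W (count_space UNIV)"
      by (rule measurable_cong_sets) simp_all
    ultimately show ?thesis by simp
  qed
  have sndW[measurable]: "snd \<in> measurable W S" unfolding W_def by (rule measurable_snd)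
  have CcS: "Cc \<in> sets W"
  proof -
    have snthS: "(\<lambda>\<omega>. snd \<omega> !! i) \<in> measurable W Q" for i
      using measurable_compose[OF sndW measurable_snth[of i Q, folded S_def]] by simp
    have "Measurable.pred W (\<lambda>\<omega>. \<exists>i. i < fst \<omega> \<and> \<not> good (snd \<omega> !! i))"
    proof (intro pred_intros_countable pred_intros_logic)
      fix i
      show "Measurable.pred W (\<lambda>\<omega>. i < fst \<omega>)" by measurable
      show "Measurable.pred W (\<lambda>\<omega>. good (snd \<omega> !! i))"
        by (rule measurable_compose[OF snthS goodP])
    qed
    then have "{\<omega>\<in>space W. \<exists>i. i < fst \<omega> \<and> \<not> good (snd \<omega> !! i)} \<in> sets W" by (rule predE)
    then show ?thesis unfolding Cc_def spW by simp
  qed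
  have Cdef: "{(N, ws). \<forall>i<N. cap (walk_range (fst (ws !! i)) (snd (ws !! i)) \<inter> B) < thr} = space W - Cc"
    unfolding Cc_def spW good_def by auto
  have badQ: "emeasure Q {p\<in>space Q. \<not> good p} \<le> ennreal pb"
  proof -
    interpret T: sigma_finite_measure "steps_space :: (int^'d) stream measure"
      using prob_space_steps by (metis prob_space_imp_sigma_finite)
    have "{p\<in>space Q. \<not> good p} \<in> sets Q" using goodP by measurable
    then have "emeasure Q {p\<in>space Q. \<not> good p} = (\<integral>\<^sup>+x. emeasure steps_space (Pair x -` {p\<in>space Q. \<not> good p}) \<partial>measure_pmf \<nu>)"
      unfolding Q_def by (rule T.emeasure_pair_measure_alt)
    also have "\<dots> \<le> (\<integral>\<^sup>+x. ennreal pb \<partial>measure_pmf \<nu>)"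
    proof (rule nn_integral_mono)
      fix x
      have "Pair x -` {p\<in>space Q. \<not> good p} = {s. thr \<le> cap (walk_range x s \<inter> B)}"
        unfolding good_def spQ by auto
      then show "emeasure steps_space (Pair x -` {p\<in>space Q. \<not> good p}) \<le> ennreal pb"
        using single[of x] by simp
    qed
    also have "\<dots> = ennreal pb" by (simp add: measure_pmf.emeasure_space_1)
    finally show ?thesis .
  qed
  have badS: "emeasure S {ws. \<exists>i<N. \<not> good (ws !! i)} \<le> of_nat N * ennreal pb" for N
  proof -
    have eqi: "{ws. \<exists>i<N. \<not> good (ws !! i)} = (\<Union>i\<in>{..<N}. {ws\<in>space S. \<not> good (ws !! i)})"
      using spS by auto
    have si: "emeasure S {ws\<in>space S. \<not> good (ws !! i)} \<le> ennreal pb" for i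
      unfolding S_def using emeasure_snth[OF PQ, of "\<lambda>p. \<not> good p" i] badQ
      by simp
    have "emeasure S {ws. \<exists>i<N. \<not> good (ws !! i)} \<le> (\<Sum>i\<in>{..<N}. emeasure S {ws\<in>space S. \<not> good (ws !! i)})"
      unfolding eqi
    proof (rule emeasure_subadditive_finite)
      show "(\<lambda>i. {ws \<in> space S. \<not> good (ws !! i)}) ` {..<N} \<subseteq> sets S"
      proof clarify
        fix i
        have "Measurable.pred S (\<lambda>ws. good (ws !! i))"
          by (rule measurable_compose[OF measurable_snth[of i Q, folded S_def] goodP])
        then have "Measurable.pred S (\<lambda>ws. \<not> good (ws !! i))" by measurable
        then show "{ws \<in> space S. \<not> good (ws !! i)} \<in> sets S" by (rule predE)
      qed
    qed simp
    also have "\<dots> \<le> (\<Sum>i\<in>{..<N}. ennreal pb)" by (intro sum_mono si)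
    also have "\<dots> = of_nat N * ennreal pb" by simp
    finally show ?thesis .
  qed
  have "emeasure W Cc = (\<integral>\<^sup>+N. emeasure S (Pair N -` Cc) \<partial>measure_pmf (poisson_pmf rate))"
    unfolding W_def by (rule S.emeasure_pair_measure_alt) (use CcS W_def in simp)
  also have "\<dots> \<le> (\<integral>\<^sup>+N. ennreal pb * ennreal (real N) \<partial>measure_pmf (poisson_pmf rate))"
  proof (rule nn_integral_mono)
    fix N
    have "Pair N -` Cc = {ws. \<exists>i<N. \<not> good (ws !! i)}" unfolding Cc_def by auto
    then show "emeasure S (Pair N -` Cc) \<le> ennreal pb * ennreal (real N)"
      using badS[of N] by (simp add: mult.commute ennreal_of_nat_eq_real_of_nat)
  qed
  also have "\<dots> = ennreal pb * (\<integral>\<^sup>+N. ennreal (real N) \<partial>measure_pmf (poisson_pmf rate))"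
    by (rule nn_integral_cmult) simp
  also have "\<dots> = ennreal (pb * rate)" using poisson_mean[OF r0] pb0 r0 by (simp add: ennreal_mult)
  finally have "emeasure W Cc \<le> ennreal (pb * rate)" .
  then have "measure W Cc \<le> pb * rate"
    using pb0 r0 unfolding W.emeasure_eq_measure by (simp add: ennreal_le_iff)
  then have "measure W (space W - Cc) \<ge> 1 - rate * pb"
    using W.prob_compl[OF CcS] by (simp add: mult.commute)
  then have "measure W {(N, ws). \<forall>i<N. cap (walk_range (fst (ws !! i)) (snd (ws !! i)) \<inter> B) < thr} \<ge> 1 - rate * pb"
    by (simp only: Cdef)
  then show ?thesis unfolding W_def S_def Q_def .
qed



lemma exp_ge_pow_fact:
  fixes x :: real assumes "x \<ge> 0"
  shows "x ^ k / fact k \<le> exp x"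
proof -
  have "x ^ k / fact k \<le> (\<Sum>n\<le>k. x ^ n / fact n)"
    using assms by (intro member_le_sum) auto
  also have "\<dots> \<le> exp x"
    using assms summable_exp_generic[of x]
    by (auto simp: exp_def divide_inverse ac_simps intro!: sum_le_suminf)
  finally show ?thesis .
qed

lemma asym:
  fixes \<epsilon> u :: real and d :: nat
  assumes d5: "d \<ge> 5" and e0: "0 < \<epsilon>" and e1: "\<epsilon> < 1/12" and u0: "0 < u" and u1: "u < 1"
  defines "D \<equiv> real d"
  defines "L \<equiv> u powr (2*\<epsilon>) / sqrt u"
  defines "c \<equiv> 1 / (8*D*(D+1)^3*(4+D))"
  defines "\<beta> \<equiv> ((1/2 - 2*\<epsilon>)*D - 1) / \<epsilon>"
  defines "k \<equiv> nat \<lceil>\<beta>\<rceil>"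
  defines "Cst \<equiv> 2 * 6^d * fact k * (2/c)^k"
  shows "u * (4*L+2)^d * (2 * exp (- (1 / (8*D*(D+1)^3*(4*L^2 + D))) * (u powr (-2*\<epsilon>) * L^2)))
         \<le> Cst * exp (- (c/2) * u powr (-\<epsilon>))"
proof -
  have D5: "D \<ge> 5" unfolding D_def using d5 by simp
  have cpos: "c > 0" unfolding c_def using D5 by simp
  define v where "v = u powr (-\<epsilon>)"
  have Leq: "L = u powr (2*\<epsilon> - 1/2)"
    unfolding L_def using u0 by (simp add: powr_half_sqrt[symmetric] powr_diff)
  have L1: "L \<ge> 1"
  proof -
    have "u powr 0 \<le> u powr (2*\<epsilon> - 1/2)" using u0 u1 e1 by (intro powr_mono') auto
    then show ?thesis unfolding Leq using u0 by simp
  qed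
  have v1: "v \<ge> 1"
  proof -
    have "u powr 0 \<le> u powr (-\<epsilon>)" using u0 u1 e0 by (intro powr_mono') auto
    then show ?thesis unfolding v_def using u0 by simp
  qed
  have vpos: "v > 0" using v1 by simp
  have v2: "v^2 = u powr (-2*\<epsilon>)"
    unfolding v_def using u0 by (simp add: powr_realpow[symmetric] powr_powr mult.commute)
  have "(4*L+2)^d \<le> (6*L)^d" using L1 by (intro power_mono) auto
  then have P1: "u * (4*L+2)^d \<le> 6^d * (u * L^d)" using u0 by (simp add: power_mult_distrib)
  have "u * L^d = u powr (1 + (2*\<epsilon> - 1/2) * D)"
    unfolding Leq D_def using u0 by (simp add: powr_add powr_realpow[symmetric] powr_powr mult.commute)
  also have "\<dots> = v powr \<beta>"
  proof -
    have ex: "- \<epsilon> * \<beta> = 1 + (2*\<epsilon> - 1/2) * D" unfolding \<beta>_def using e0 by (simp add: field_simps)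
    show ?thesis unfolding v_def powr_powr ex ..
  qed
  also have "\<dots> \<le> v powr (real k)"
    using v1 unfolding k_def by (intro powr_mono) (auto simp: real_nat_ceiling_ge)
  also have "\<dots> = v ^ k" using vpos by (simp add: powr_realpow)
  finally have P2: "u * L^d \<le> v ^ k" .
  have P3: "v ^ k \<le> fact k * (2/c)^k * exp ((c/2) * v)"
  proof -
    have "((c/2) * v) ^ k / fact k \<le> exp ((c/2) * v)" using cpos vpos by (intro exp_ge_pow_fact) simp
    then have "((c/2) * v) ^ k \<le> fact k * exp ((c/2) * v)" by (simp add: field_simps)
    then have "(2/c)^k * ((c/2) * v) ^ k \<le> (2/c)^k * (fact k * exp ((c/2) * v))"
      using cpos by (intro mult_left_mono) auto
    moreover have "(2/c)^k * ((c/2) * v) ^ k = v ^ k" using cpos by (simp add: power_mult_distrib[symmetric])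
    ultimately show ?thesis by (simp add: ac_simps)
  qed
  have A: "4*L^2 + D \<le> (4 + D) * L^2"
  proof -
    have "D * 1 \<le> D * L^2" using D5 L1 by (intro mult_left_mono) (auto simp: one_le_power)
    then show ?thesis by (simp add: algebra_simps)
  qed
  have E1: "c * v^2 \<le> (1 / (8*D*(D+1)^3*(4*L^2 + D))) * (u powr (-2*\<epsilon>) * L^2)"
  proof -
    have pos: "8*D*(D+1)^3 > 0" using D5 by simp
    have Lnz: "L^2 \<noteq> 0" using L1 by simp
    have "c * v^2 = (v^2 * L^2) / ((8*D*(D+1)^3*(4+D)) * L^2)" unfolding c_def using Lnz by simp
    also have "\<dots> = v^2 * L^2 / (8*D*(D+1)^3*((4+D)*L^2))" by (simp add: ac_simps)
    finally have "c * v^2 = v^2 * L^2 / (8*D*(D+1)^3*((4+D)*L^2))" .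
    also have "\<dots> \<le> v^2 * L^2 / (8*D*(D+1)^3*(4*L^2 + D))"
      using A pos L1 D5 by (intro divide_left_mono mult_left_mono mult_pos_pos) (auto intro: add_pos_nonneg)
    finally show ?thesis unfolding v2 by simp
  qed
  have E2: "c * v \<le> c * v^2" using cpos v1 by (intro mult_left_mono) (auto simp: power2_eq_square)
  have E: "exp (- (1 / (8*D*(D+1)^3*(4*L^2 + D))) * (u powr (-2*\<epsilon>) * L^2)) \<le> exp (- (c * v))"
    using E1 E2 by simp
  have "u * (4*L+2)^d * (2 * exp (- (1 / (8*D*(D+1)^3*(4*L^2 + D))) * (u powr (-2*\<epsilon>) * L^2)))
      \<le> (6^d * (fact k * (2/c)^k * exp ((c/2) * v))) * (2 * exp (- (c * v)))"
  proof (rule mult_mono)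
    show "u * (4*L+2)^d \<le> 6^d * (fact k * (2/c)^k * exp ((c/2) * v))"
      using P1 P2 P3 by (meson mult_left_mono order_trans zero_le_numeral zero_le_power)
  qed (use E cpos in auto)
  also have "\<dots> = Cst * (exp ((c/2) * v) * exp (- (c * v)))" unfolding Cst_def by (simp add: ac_simps)
  also have "exp ((c/2) * v) * exp (- (c * v)) = exp (- (c/2) * v)" by (simp add: exp_add[symmetric])
  finally show ?thesis unfolding v_def by simp
qed



lemma prob_C_ge:
  fixes \<epsilon> u :: real
  assumes D5: "real CARD('d::finite) \<ge> 5" and u0: "u > 0"
  shows "prob_C TYPE('d) \<epsilon> u \<ge> 1 - u * real (card (box_Zd (2 * L_scale \<epsilon> u) :: (int^'d) set)) *
     (2 * exp (- (1 / (8*real CARD('d)*(real CARD('d)+1)^3*(4*(L_scale \<epsilon> u)^2 + real CARD('d)))) * (u powr (-2*\<epsilon>) * (L_scale \<epsilon> u)^2)))"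
proof -
  define L where "L = L_scale \<epsilon> u"
  define D where "D = real CARD('d)"
  define B where "B = (box_Zd (2 * L) :: (int^'d) set)"
  define thr where "thr = u powr (-2*\<epsilon>) * L^2"
  define \<mu> where "\<mu> = 1 / (8*D*(D+1)^3*(4*L^2 + D))"
  define pb where "pb = 2 * exp (-\<mu> * thr)"
  have L0: "L > 0" unfolding L_def L_scale_def using u0 by simp
  have capB: "cap B > 0" unfolding B_def by (rule cap_pos[OF D5 L0])
  have r0: "u * cap B > 0" using u0 capB by simp
  have pb0: "pb \<ge> 0" unfolding pb_def by simp
  have single: "emeasure steps_space {s. thr \<le> cap (walk_range x s \<inter> B)} \<le> ennreal pb" for x :: "int^'d"
    unfolding B_def pb_def \<mu>_def D_def by (rule single_path[OF D5 L0])
  have "measure (measure_pmf (poisson_pmf (u * cap B)) \<Otimes>\<^sub>M stream_space (measure_pmf (norm_equilibrium B) \<Otimes>\<^sub>M steps_space))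
           {(N, ws). \<forall>i<N. cap (walk_range (fst (ws !! i)) (snd (ws !! i)) \<inter> B) < thr} \<ge> 1 - (u * cap B) * pb"
    by (rule main_bound[OF r0 _ pb0 single]) (simp add: B_def finite_box)
  moreover have "prob_C TYPE('d) \<epsilon> u = measure (measure_pmf (poisson_pmf (u * cap B)) \<Otimes>\<^sub>M stream_space (measure_pmf (norm_equilibrium B) \<Otimes>\<^sub>M steps_space))
           {(N, ws). \<forall>i<N. cap (walk_range (fst (ws !! i)) (snd (ws !! i)) \<inter> B) < thr}"
    unfolding prob_C_def W_space_def C_event_def Let_def B_def thr_def L_def by simp
  moreover have "(u * cap B) * pb \<le> u * real (card B) * pb"
    using u0 pb0 cap_le_card[of B] by (intro mult_right_mono mult_left_mono) auto
  ultimately have "prob_C TYPE('d) \<epsilon> u \<ge> 1 - u * real (card B) * pb" by linarith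
  then show ?thesis unfolding pb_def \<mu>_def thr_def B_def L_def D_def by simp
qed

theorem mainTheorem10:
  fixes \<epsilon> :: real
  assumes "CARD('d::finite) \<ge> 5"
    and "0 < \<epsilon>" and "\<epsilon> < 1/12"
  shows "\<exists>u1>0. \<exists>\<xi>>0. \<exists>C>0. \<forall>u. 0 < u \<and> u < u1 \<longrightarrow>
           prob_C TYPE('d) \<epsilon> u \<ge> 1 - C * exp (- \<xi> * u powr (- \<epsilon>))"
proof -
  define d where "d = CARD('d)"
  define D where "D = real d"
  define c where "c = 1 / (8*D*(D+1)^3*(4+D))"
  define \<beta> where "\<beta> = ((1/2 - 2*\<epsilon>)*D - 1) / \<epsilon>"
  define k where "k = nat \<lceil>\<beta>\<rceil>"
  define Cst where "Cst = 2 * 6^d * fact k * (2/c)^k"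
  have d5: "d \<ge> 5" unfolding d_def using assms(1) .
  have D5: "real CARD('d) \<ge> 5" using d5 unfolding d_def by simp
  have cpos: "c > 0" unfolding c_def D_def using d5 by simp
  have Cpos: "Cst > 0" unfolding Cst_def using cpos by simp
  have "\<forall>u. 0 < u \<and> u < 1 \<longrightarrow> prob_C TYPE('d) \<epsilon> u \<ge> 1 - Cst * exp (- (c/2) * u powr (- \<epsilon>))"
  proof (intro allI impI)
    fix u :: real assume u: "0 < u \<and> u < 1"
    define L where "L = L_scale \<epsilon> u"
    have L0: "L > 0" unfolding L_def L_scale_def using u by simp
    have cb: "real (card (box_Zd (2 * L) :: (int^'d) set)) \<le> (4*L+2)^d"
      using card_box[of "2*L", where 'd='d] L0 unfolding d_def by simp
    have ex0: "0 \<le> 2 * exp (- (1 / (8*D*(D+1)^3*(4*L^2 + D))) * (u powr (-2*\<epsilon>) * L^2))" by simp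
    have "prob_C TYPE('d) \<epsilon> u \<ge> 1 - u * real (card (box_Zd (2 * L) :: (int^'d) set)) *
        (2 * exp (- (1 / (8*D*(D+1)^3*(4*L^2 + D))) * (u powr (-2*\<epsilon>) * L^2)))"
      using prob_C_ge[OF D5, of u \<epsilon>] u unfolding L_def D_def d_def by simp
    moreover have "u * real (card (box_Zd (2 * L) :: (int^'d) set)) * (2 * exp (- (1 / (8*D*(D+1)^3*(4*L^2 + D))) * (u powr (-2*\<epsilon>) * L^2)))
        \<le> u * (4*L+2)^d * (2 * exp (- (1 / (8*D*(D+1)^3*(4*L^2 + D))) * (u powr (-2*\<epsilon>) * L^2)))"
      using cb u ex0 by (intro mult_right_mono mult_left_mono) auto
    moreover have "u * (4*L+2)^d * (2 * exp (- (1 / (8*D*(D+1)^3*(4*L^2 + D))) * (u powr (-2*\<epsilon>) * L^2)))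
        \<le> Cst * exp (- (c/2) * u powr (-\<epsilon>))"
      using asym[OF d5 assms(2,3), of u] u unfolding L_def L_scale_def Cst_def c_def k_def \<beta>_def D_def by simp
    ultimately show "prob_C TYPE('d) \<epsilon> u \<ge> 1 - Cst * exp (- (c/2) * u powr (- \<epsilon>))" by linarith
  qed
  moreover have "(0::real) < 1" "c/2 > 0" using cpos by auto
  ultimately show ?thesis using Cpos by blast
qed


end
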